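(* Let the setting and the algorithm RandProx-FL be as in the context, and suppose $0<\gamma<\frac{2}{L}$. For $t\ge0$ let $$\Psi^t:=\sum_{i=1}^n\left(\frac{1}{\gamma}\|x_i^t-x^\star\|^2+\gamma(1+\omega)^2\|u_i^t-u_i^\star\|^2\right),$$ where $x^\star$ is the unique minimizer of $\sum_{i=1}^n f_i$ and $u_i^\star:=-\nabla f_i(x^\star)$. Then for every $t\ge0$, $\mathbb{E}[\Psi^t]\le c^t\Psi^0$, where $$c:=\max\left((1-\gamma\mu)^2,\ (\gamma L-1)^2,\ 1-\frac{1}{(1+\omega)^2}\right)<1.$$ Moreover, every $(x_i^t)_t$ and $(\hat{x}_i^t)_t$ converges to $x^\star$ and every $(u_i^t)_t$ converges to $u_i^\star$, almost surely.
   Context: $d,n\ge1$; each $f_i:\mathbb{R}^d\to\mathbb{R}$, $i=1,\dots,n$, is $\mu$-strongly convex and $L$-smooth ($\nabla f_i$ $L$-Lipschitz), $L\ge\mu>0$. Problem: minimize $\sum_{i=1}^n f_i(x)$ over $x\in\mathbb{R}^d$. Algorithm RandProx-FL: inputs $(x_i^0)_{i=1}^n,(u_i^0)_{i=1}^n\in(\mathbb{R}^d)^n$ with $\sum_i u_i^0=0$, $\gamma>0$, $\omega\ge0$; for $t\ge0$: for each $i$, $\hat{x}_i^t:=x_i^t-\gamma\nabla f_i(x_i^t)-\gamma u_i^t$ and $a_i^t:=\mathcal{R}^t(\hat{x}_i^t)$; $a^t:=\frac1n\sum_i a_i^t$; for each $i$, $d_i^t:=a_i^t-a^t$, $u_i^{t+1}:=u_i^t+\frac{1}{\gamma(1+\omega)^2}d_i^t$,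 $x_i^{t+1}:=\hat{x}_i^t-\frac{1}{1+\omega}d_i^t$. Here, at each iteration $t$, the same random linear operator $\mathcal{R}^t$ on $\mathbb{R}^d$ is applied at every $i$; with $\mathcal{F}_t$ the $\sigma$-algebra generated by the iterates $(x_i^s,u_i^s)_{i}$, $s\le t$, it satisfies $\mathbb{E}[\mathcal{R}^t(y)\mid\mathcal{F}_t]=y$ and $\mathbb{E}[\|\mathcal{R}^t(y)-y\|^2\mid\mathcal{F}_t]\le\omega\|y\|^2$ for every $\mathcal{F}_t$-measurable random vector $y\in\mathbb{R}^d$. *)

theory Defs
  imports "HOL-Probability.Probability"
begin

definition strongly_convex_on :: "'a::real_normed_vector set \<Rightarrow> real \<Rightarrow> ('a \<Rightarrow> real) \<Rightarrow> bool" where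
  "strongly_convex_on S mu f \<longleftrightarrow>
     (\<forall>x\<in>S. \<forall>y\<in>S. \<forall>s::real. 0 \<le> s \<and> s \<le> 1 \<longrightarrow>
        f ((1 - s) *\<^sub>R x + s *\<^sub>R y) \<le> (1 - s) * f x + s * f y - mu / 2 * s * (1 - s) * (norm (x - y))\<^sup>2)"

text \<open>One iteration of RandProx-FL. Agents are indexed by i < n; g i is the gradient of f i;
  Rop is the (realised) linear operator of the current iteration; the state is (x, u).\<close>
definition rpfl_xhat :: "(nat \<Rightarrow> 'd::euclidean_space \<Rightarrow> 'd) \<Rightarrow> real \<Rightarrow> (nat \<Rightarrow> 'd) \<times> (nat \<Rightarrow> 'd) \<Rightarrow> nat \<Rightarrow> 'd" where
  "rpfl_xhat g \<gamma> st i = fst st i - \<gamma> *\<^sub>R g i (fst st i) - \<gamma> *\<^sub>R snd st i"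

definition rpfl_step :: "nat \<Rightarrow> (nat \<Rightarrow> 'd::euclidean_space \<Rightarrow> 'd) \<Rightarrow> real \<Rightarrow> real \<Rightarrow> ('d \<Rightarrow> 'd)
    \<Rightarrow> (nat \<Rightarrow> 'd) \<times> (nat \<Rightarrow> 'd) \<Rightarrow> (nat \<Rightarrow> 'd) \<times> (nat \<Rightarrow> 'd)" where
  "rpfl_step n g \<gamma> \<omega> Rop st =
     (let xh = rpfl_xhat g \<gamma> st;
          a = (\<lambda>i. Rop (xh i));
          abar = (1 / real n) *\<^sub>R (\<Sum>j<n. a j);
          d = (\<lambda>i. a i - abar)
      in (\<lambda>i. xh i - (1 / (1 + \<omega>)) *\<^sub>R d i,
          \<lambda>i. snd st i + (1 / (\<gamma> * (1 + \<omega>)\<^sup>2)) *\<^sub>R d i))"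

primrec rpfl :: "nat \<Rightarrow> (nat \<Rightarrow> 'd::euclidean_space \<Rightarrow> 'd) \<Rightarrow> real \<Rightarrow> real
    \<Rightarrow> (nat \<Rightarrow> 'w \<Rightarrow> 'd \<Rightarrow> 'd) \<Rightarrow> (nat \<Rightarrow> 'd) \<Rightarrow> (nat \<Rightarrow> 'd) \<Rightarrow> nat \<Rightarrow> 'w
    \<Rightarrow> (nat \<Rightarrow> 'd) \<times> (nat \<Rightarrow> 'd)" where
  "rpfl n g \<gamma> \<omega> R x0 u0 0 w = (x0, u0)"
| "rpfl n g \<gamma> \<omega> R x0 u0 (Suc t) w = rpfl_step n g \<gamma> \<omega> (R t w) (rpfl n g \<gamma> \<omega> R x0 u0 t w)"

definition rpfl_filt :: "'w measure \<Rightarrow> nat \<Rightarrow> (nat \<Rightarrow> 'd::euclidean_space \<Rightarrow> 'd) \<Rightarrow> real \<Rightarrow> real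
    \<Rightarrow> (nat \<Rightarrow> 'w \<Rightarrow> 'd \<Rightarrow> 'd) \<Rightarrow> (nat \<Rightarrow> 'd) \<Rightarrow> (nat \<Rightarrow> 'd) \<Rightarrow> nat \<Rightarrow> 'w measure" where
  "rpfl_filt M n g \<gamma> \<omega> R x0 u0 t =
     sigma (space M)
       ({(\<lambda>w. fst (rpfl n g \<gamma> \<omega> R x0 u0 s w) i) -` B \<inter> space M | s i B. s \<le> t \<and> i < n \<and> B \<in> sets borel}
      \<union> {(\<lambda>w. snd (rpfl n g \<gamma> \<omega> R x0 u0 s w) i) -` B \<inter> space M | s i B. s \<le> t \<and> i < n \<and> B \<in> sets borel})"

end

theory Submission
  imports Defs
begin

lemma line_deriv:
  fixes f :: "'d::euclidean_space \<Rightarrow> real"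
  assumes grad: "\<And>z. GDERIV f z :> g z"
  shows "((\<lambda>t. f (x + t *\<^sub>R v)) has_real_derivative (g (x + t *\<^sub>R v) \<bullet> v)) (at t)"
proof -
  have d1: "((\<lambda>t. x + t *\<^sub>R v) has_derivative (\<lambda>s. s *\<^sub>R v)) (at t)"
    by (auto intro!: derivative_eq_intros)
  have "((\<lambda>t. f (x + t *\<^sub>R v)) has_derivative (\<lambda>s. (s *\<^sub>R v) \<bullet> g (x + t *\<^sub>R v))) (at t)"
    using has_derivative_compose[OF d1 grad[unfolded gderiv_def]] by simp
  moreover have "(\<lambda>s. (s *\<^sub>R v) \<bullet> g (x + t *\<^sub>R v)) = (*) (g (x + t *\<^sub>R v) \<bullet> v)"
    by (auto simp: inner_commute)
  ultimately show ?thesis by (simp add: has_field_derivative_def)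
qed

lemma upper_quad:
  fixes f :: "'d::euclidean_space \<Rightarrow> real"
  assumes grad: "\<And>z. GDERIV f z :> g z"
    and lip: "\<And>x y. norm (g x - g y) \<le> L * norm (x - y)"
  shows "f y \<le> f x + g x \<bullet> (y - x) + L / 2 * (norm (y - x))\<^sup>2"
proof -
  define v where "v = y - x"
  define \<phi> where "\<phi> = (\<lambda>t. f (x + t *\<^sub>R v) - t * (g x \<bullet> v) - L / 2 * t\<^sup>2 * (norm v)\<^sup>2)"
  have "\<phi> 1 \<le> \<phi> 0"
  proof (rule DERIV_nonpos_imp_nonincreasing[of 0 1])
    fix t :: real assume t: "0 \<le> t" "t \<le> 1"
    have D: "(\<phi> has_real_derivative (g (x + t *\<^sub>R v) \<bullet> v - g x \<bullet> v - L * t * (norm v)\<^sup>2)) (at t)"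
      unfolding \<phi>_def
      by (rule derivative_eq_intros line_deriv[OF grad] refl | simp)+
    have "g (x + t *\<^sub>R v) \<bullet> v - g x \<bullet> v = (g (x + t *\<^sub>R v) - g x) \<bullet> v"
      by (simp add: inner_diff_left)
    also have "\<dots> \<le> norm (g (x + t *\<^sub>R v) - g x) * norm v"
      by (rule norm_cauchy_schwarz)
    also have "\<dots> \<le> (L * norm (t *\<^sub>R v)) * norm v"
      using lip[of "x + t *\<^sub>R v" x] by (intro mult_right_mono) auto
    also have "\<dots> = L * t * (norm v)\<^sup>2"
      using t by (simp add: power2_eq_square)
    finally show "\<exists>y. (\<phi> has_real_derivative y) (at t) \<and> y \<le> 0"
      using D by (intro exI[of _ "g (x + t *\<^sub>R v) \<bullet> v - g x \<bullet> v - L * t * (norm v)\<^sup>2"]) auto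
  qed simp
  then show ?thesis unfolding \<phi>_def v_def by simp
qed

lemma lower_quad:
  fixes f :: "'d::euclidean_space \<Rightarrow> real"
  assumes grad: "\<And>z. GDERIV f z :> g z"
    and sc: "strongly_convex_on UNIV \<mu> f"
  shows "f x + g x \<bullet> (y - x) + \<mu> / 2 * (norm (y - x))\<^sup>2 \<le> f y"
proof -
  define v where "v = y - x"
  have D: "((\<lambda>t. f (x + t *\<^sub>R v)) has_real_derivative (g x \<bullet> v)) (at 0)"
    using line_deriv[OF grad, of x v 0] by simp
  hence T: "((\<lambda>s. (f (x + s *\<^sub>R v) - f x) / s) \<longlongrightarrow> g x \<bullet> v) (at_right 0)"
    unfolding has_field_derivative_iff by (auto intro: tendsto_mono[OF at_le])
  have T2: "((\<lambda>s. f y - f x - \<mu> / 2 * (1 - s) * (norm v)\<^sup>2) \<longlongrightarrow> f y - f x - \<mu> / 2 * (1 - 0) * (norm v)\<^sup>2) (at_right 0)"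
    by (intro tendsto_intros)
  have ev: "\<forall>\<^sub>F s in at_right 0. (f (x + s *\<^sub>R v) - f x) / s \<le> f y - f x - \<mu> / 2 * (1 - s) * (norm v)\<^sup>2"
  proof -
    have "\<forall>\<^sub>F s in at_right (0::real). s < 1" using eventually_at_right_field zero_less_one by blast
    moreover have "\<forall>\<^sub>F s in at_right (0::real). 0 < s" by (rule eventually_at_right_less) 
    ultimately show ?thesis
    proof eventually_elim
      case (elim s)
      have "f ((1 - s) *\<^sub>R x + s *\<^sub>R y) \<le> (1 - s) * f x + s * f y - \<mu> / 2 * s * (1 - s) * (norm (x - y))\<^sup>2"
        using sc elim unfolding strongly_convex_on_def by auto
      moreover have "(1 - s) *\<^sub>R x + s *\<^sub>R y = x + s *\<^sub>R v" by (simp add: v_def algebra_simps)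
      moreover have "norm (x - y) = norm v" by (simp add: v_def norm_minus_commute)
      ultimately have "f (x + s *\<^sub>R v) - f x \<le> s * (f y - f x - \<mu> / 2 * (1 - s) * (norm v)\<^sup>2)"
        by (simp add: algebra_simps)
      then show ?case using elim by (simp add: divide_le_eq mult.commute)
    qed
  qed
  have "g x \<bullet> v \<le> f y - f x - \<mu> / 2 * (1 - 0) * (norm v)\<^sup>2"
    by (rule tendsto_le[OF _ T2 T ev]) simp
  then show ?thesis by (simp add: v_def)
qed

lemma real_aux:
  fixes P Q K :: real
  assumes H: "\<And>s. 2 * s * Q - K * s\<^sup>2 * Q \<le> P" and Q: "0 \<le> Q" and K: "0 \<le> K"
  shows "Q \<le> K * P"
proof (cases "K = 0")
  case True
  show ?thesis
  proof (rule ccontr)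
    assume "\<not> Q \<le> K * P"
    hence "Q > 0" using True by simp
    have "2 * ((\<bar>P\<bar> + 1) / Q) * Q - K * ((\<bar>P\<bar> + 1) / Q)\<^sup>2 * Q \<le> P" by (rule H)
    hence "2 * (\<bar>P\<bar> + 1) \<le> P" using True \<open>Q > 0\<close> by simp
    thus False by simp
  qed
next
  case False
  hence Kp: "K > 0" using K by simp
  have "2 * (1/K) * Q - K * (1/K)\<^sup>2 * Q \<le> P" by (rule H)
  hence "Q / K \<le> P" using Kp by (simp add: power2_eq_square field_simps)
  thus ?thesis using Kp by (simp add: field_simps)
qed

lemma coco:
  fixes f :: "'d::euclidean_space \<Rightarrow> real"
  assumes low: "\<And>x y. f x + g x \<bullet> (y - x) + \<mu> / 2 * (norm (y - x))\<^sup>2 \<le> f y"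
    and up: "\<And>x y. f y \<le> f x + g x \<bullet> (y - x) + L / 2 * (norm (y - x))\<^sup>2"
    and muL: "\<mu> \<le> L"
  shows "0 \<le> (g x - g y - \<mu> *\<^sub>R (x - y)) \<bullet> (L *\<^sub>R (x - y) - (g x - g y))"
proof -
  define K where "K = L - \<mu>"
  define h where "h = (\<lambda>z. f z - \<mu> / 2 * (norm z)\<^sup>2)"
  define G where "G = (\<lambda>z. g z - \<mu> *\<^sub>R z)"
  define b where "b = (\<lambda>a z. h z - h a - G a \<bullet> (z - a))"
  have beq: "b a z = f z - f a - g a \<bullet> (z - a) - \<mu> / 2 * (norm (z - a))\<^sup>2" for a z
    unfolding b_def h_def G_def
    by (simp add: power2_norm_eq_inner inner_diff_left inner_diff_right inner_commute algebra_simps)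
  have b0: "0 \<le> b a z" for a z using low[where x=a and y=z] unfolding beq by simp
  have bK: "b a z \<le> K / 2 * (norm (z - a))\<^sup>2" for a z using up[where x=a and y=z] unfolding beq K_def
    by (simp add: algebra_simps)
  have tri: "b a z = b a y + b y z + (G y - G a) \<bullet> (z - y)" for a y z
    unfolding b_def by (simp add: inner_diff_left inner_diff_right algebra_simps)
  define v where "v = G y - G x"
  have key: "2 * s * (norm v)\<^sup>2 - K * s\<^sup>2 * (norm v)\<^sup>2 \<le> v \<bullet> (y - x)" for s
  proof -
    have 1: "0 \<le> b x y + K / 2 * s\<^sup>2 * (norm v)\<^sup>2 - s * (norm v)\<^sup>2"
    proof -
      have "0 \<le> b x (y - s *\<^sub>R v)" by (rule b0)
      also have "\<dots> = b x y + b y (y - s *\<^sub>R v) - s * (norm v)\<^sup>2"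
        by (subst tri[of x _ y]) (simp add: v_def power2_norm_eq_inner)
      also have "\<dots> \<le> b x y + K / 2 * s\<^sup>2 * (norm v)\<^sup>2 - s * (norm v)\<^sup>2"
        using bK[of y "y - s *\<^sub>R v"] by (simp add: power_mult_distrib)
      finally show ?thesis .
    qed
    have 2: "0 \<le> b y x + K / 2 * s\<^sup>2 * (norm v)\<^sup>2 - s * (norm v)\<^sup>2"
    proof -
      have "0 \<le> b y (x + s *\<^sub>R v)" by (rule b0)
      also have "\<dots> = b y x + b x (x + s *\<^sub>R v) - s * (norm v)\<^sup>2"
        by (subst tri[of y _ x]) (simp add: v_def power2_norm_eq_inner inner_diff_left inner_diff_right inner_commute algebra_simps)
      also have "\<dots> \<le> b y x + K / 2 * s\<^sup>2 * (norm v)\<^sup>2 - s * (norm v)\<^sup>2"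
        using bK[of x "x + s *\<^sub>R v"] by (simp add: power_mult_distrib)
      finally show ?thesis .
    qed
    have 3: "b x y + b y x = v \<bullet> (y - x)"
      unfolding b_def v_def by (simp add: inner_diff_left inner_diff_right inner_commute algebra_simps)
    show ?thesis using 1 2 3 by (simp add: algebra_simps)
  qed
  have "(norm v)\<^sup>2 \<le> K * (v \<bullet> (y - x))"
    by (rule real_aux[OF key]) (auto simp: K_def muL)
  moreover have e1: "g x - g y - \<mu> *\<^sub>R (x - y) = - v" by (simp add: v_def G_def algebra_simps)
  moreover have e2: "L *\<^sub>R (x - y) - (g x - g y) = K *\<^sub>R (x - y) + v"
    by (simp add: v_def G_def K_def algebra_simps)
  ultimately show ?thesis
    unfolding e1 e2
    by (simp add: inner_add_right inner_diff_right inner_diff_left power2_norm_eq_inner algebra_simps)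
qed

lemma contract:
  fixes e D :: "'d::euclidean_space"
  assumes H: "0 \<le> (D - \<mu> *\<^sub>R e) \<bullet> (L *\<^sub>R e - D)" and gam: "0 < \<gamma>" and muL: "\<mu> \<le> L"
  shows "(norm (e - \<gamma> *\<^sub>R D))\<^sup>2 \<le> max ((1 - \<gamma> * \<mu>)\<^sup>2) ((\<gamma> * L - 1)\<^sup>2) * (norm e)\<^sup>2"
proof -
  define m where "m = (\<mu> + L) / 2"
  define \<rho> where "\<rho> = (L - \<mu>) / 2"
  define r where "r = D - m *\<^sub>R e"
  have rho0: "0 \<le> \<rho>" using muL by (simp add: \<rho>_def)
  have me: "m *\<^sub>R e = \<mu> *\<^sub>R e + \<rho> *\<^sub>R e" "m *\<^sub>R e + \<rho> *\<^sub>R e = L *\<^sub>R e"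
    by (simp_all add: m_def \<rho>_def flip: scaleR_add_left) (simp_all add: field_simps)
  have "D - \<mu> *\<^sub>R e = r + \<rho> *\<^sub>R e" using me by (simp add: r_def m_def \<rho>_def algebra_simps)
  moreover have "L *\<^sub>R e - D = \<rho> *\<^sub>R e - r" using me by (simp add: r_def m_def \<rho>_def algebra_simps)
  ultimately have "0 \<le> (r + \<rho> *\<^sub>R e) \<bullet> (\<rho> *\<^sub>R e - r)" using H by simp
  hence "r \<bullet> r \<le> \<rho> * (\<rho> * (e \<bullet> e))"
    by (simp add: inner_add_left inner_diff_right power2_norm_eq_inner inner_commute algebra_simps power2_eq_square)
  hence "(norm r)\<^sup>2 \<le> \<rho>\<^sup>2 * (norm e)\<^sup>2"
    by (metis more_arith_simps(11) norm_eq_square power2_eq_square)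
  hence "(norm r)\<^sup>2 \<le> (\<rho> * norm e)\<^sup>2" by (simp add: power_mult_distrib)
  hence nr: "norm r \<le> \<rho> * norm e" using power2_le_imp_le[OF _ mult_nonneg_nonneg[OF rho0 norm_ge_zero]] by blast
  have "e - \<gamma> *\<^sub>R D = (1 - \<gamma> * m) *\<^sub>R e - \<gamma> *\<^sub>R r" by (simp add: r_def algebra_simps)
  hence "norm (e - \<gamma> *\<^sub>R D) \<le> \<bar>1 - \<gamma> * m\<bar> * norm e + \<gamma> * norm r"
    using norm_triangle_ineq4[of "(1 - \<gamma> * m) *\<^sub>R e" "\<gamma> *\<^sub>R r"] gam by simp
  also have "\<dots> \<le> (\<bar>1 - \<gamma> * m\<bar> + \<gamma> * \<rho>) * norm e"
    using nr gam by (simp add: algebra_simps mult_left_mono)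
  finally have N: "norm (e - \<gamma> *\<^sub>R D) \<le> (\<bar>1 - \<gamma> * m\<bar> + \<gamma> * \<rho>) * norm e" .
  have k: "(\<bar>1 - \<gamma> * m\<bar> + \<gamma> * \<rho>)\<^sup>2 \<le> max ((1 - \<gamma> * \<mu>)\<^sup>2) ((\<gamma> * L - 1)\<^sup>2)"
  proof (cases "0 \<le> 1 - \<gamma> * m")
    case True
    hence "\<bar>1 - \<gamma> * m\<bar> + \<gamma> * \<rho> = 1 - \<gamma> * \<mu>" by (simp add: m_def \<rho>_def field_simps)
    thus ?thesis by simp
  next
    case False
    hence "\<bar>1 - \<gamma> * m\<bar> + \<gamma> * \<rho> = \<gamma> * L - 1" by (simp add: m_def \<rho>_def field_simps)
    thus ?thesis by simp
  qed
  have "(norm (e - \<gamma> *\<^sub>R D))\<^sup>2 \<le> ((\<bar>1 - \<gamma> * m\<bar> + \<gamma> * \<rho>) * norm e)\<^sup>2"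
    by (rule power_mono[OF N]) simp
  also have "\<dots> = (\<bar>1 - \<gamma> * m\<bar> + \<gamma> * \<rho>)\<^sup>2 * (norm e)\<^sup>2" by (simp add: power_mult_distrib)
  also have "\<dots> \<le> max ((1 - \<gamma> * \<mu>)\<^sup>2) ((\<gamma> * L - 1)\<^sup>2) * (norm e)\<^sup>2"
    by (rule mult_right_mono[OF k]) simp
  finally show ?thesis .
qed

definition L2 :: "'w measure \<Rightarrow> ('w \<Rightarrow> 'd::euclidean_space) \<Rightarrow> bool" where
  "L2 M f \<longleftrightarrow> f \<in> borel_measurable M \<and> integrable M (\<lambda>w. (norm (f w))\<^sup>2)"

lemma sq_sum_le: "((a::real) + b)\<^sup>2 \<le> 2 * a\<^sup>2 + 2 * b\<^sup>2"
  using sum_squares_ge_zero[of "a - b" 0] by (simp add: power2_eq_square algebra_simps)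
  
lemma norm_add_sq_le: "(norm (x + y))\<^sup>2 \<le> 2 * (norm x)\<^sup>2 + 2 * (norm y)\<^sup>2"
proof -
  have "(norm (x + y))\<^sup>2 \<le> (norm x + norm y)\<^sup>2"
    by (rule power_mono[OF norm_triangle_ineq]) simp
  also have "\<dots> \<le> 2 * (norm x)\<^sup>2 + 2 * (norm y)\<^sup>2" by (rule sq_sum_le)
  finally show ?thesis .
qed

lemma L2_add: "L2 M f \<Longrightarrow> L2 M g \<Longrightarrow> L2 M (\<lambda>w. f w + g w)"
  unfolding L2_def
proof (intro conjI)
  assume A: "f \<in> borel_measurable M \<and> integrable M (\<lambda>w. (norm (f w))\<^sup>2)"
    "g \<in> borel_measurable M \<and> integrable M (\<lambda>w. (norm (g w))\<^sup>2)"
  show m: "(\<lambda>w. f w + g w) \<in> borel_measurable M" using A by (intro borel_measurable_add) auto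
  show "integrable M (\<lambda>w. (norm (f w + g w))\<^sup>2)"
    by (rule Bochner_Integration.integrable_bound[where f="\<lambda>w. 2 * (norm (f w))\<^sup>2 + 2 * (norm (g w))\<^sup>2"])
       (use A m norm_add_sq_le in auto)
qed

lemma L2_scaleR: "L2 M f \<Longrightarrow> L2 M (\<lambda>w. c *\<^sub>R f w)"
  unfolding L2_def by (auto simp add: power_mult_distrib)

lemma L2_minus: "L2 M f \<Longrightarrow> L2 M (\<lambda>w. - f w)"
  using L2_scaleR[of M f "-1"] by simp

lemma L2_diff: "L2 M f \<Longrightarrow> L2 M g \<Longrightarrow> L2 M (\<lambda>w. f w - g w)"
  using L2_add[of M f "\<lambda>w. - g w"] L2_minus[of M g] by simp

lemma L2_const: "finite_measure M \<Longrightarrow> L2 M (\<lambda>w. a)"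
  unfolding L2_def by (simp add: finite_measure.integrable_const)

lemma L2_sum: "finite_measure M \<Longrightarrow> (\<And>i. i \<in> I \<Longrightarrow> L2 M (f i)) \<Longrightarrow> L2 M (\<lambda>w. \<Sum>i\<in>I. f i w)"
proof (induction I rule: infinite_finite_induct)
  case (infinite A) then show ?case by (simp add: L2_const)
next
  case empty then show ?case by (simp add: L2_const)
next
  case (insert x F) then show ?case by (simp add: L2_add)
qed

lemma L2_inner: "L2 M f \<Longrightarrow> L2 M g \<Longrightarrow> integrable M (\<lambda>w. f w \<bullet> g w)"
  unfolding L2_def
proof -
  assume A: "f \<in> borel_measurable M \<and> integrable M (\<lambda>w. (norm (f w))\<^sup>2)"
    "g \<in> borel_measurable M \<and> integrable M (\<lambda>w. (norm (g w))\<^sup>2)"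
  have b: "\<bar>f w \<bullet> g w\<bar> \<le> \<bar>(norm (f w))\<^sup>2 + (norm (g w))\<^sup>2\<bar>" for w
  proof -
    have "\<bar>f w \<bullet> g w\<bar> \<le> norm (f w) * norm (g w)" by (rule Cauchy_Schwarz_ineq2)
    also have "\<dots> \<le> (norm (f w))\<^sup>2 + (norm (g w))\<^sup>2"
      using sum_squares_ge_zero[of "norm (f w) - norm (g w)" 0] 
      by (simp add: power2_eq_square algebra_simps) (smt (verit) mult_nonneg_nonneg norm_ge_zero)
    finally show ?thesis by simp
  qed
  show "integrable M (\<lambda>w. f w \<bullet> g w)"
    by (rule Bochner_Integration.integrable_bound[where f="\<lambda>w. (norm (f w))\<^sup>2 + (norm (g w))\<^sup>2"]) (use A b in auto)
qed

lemma L2_comp: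
  fixes h :: "'d::euclidean_space \<Rightarrow> 'e::euclidean_space" and f :: "'w \<Rightarrow> 'd"
  assumes "finite_measure M" "L2 M f" "continuous_on UNIV h" "\<And>x. norm (h x) \<le> a + b * norm x"
  shows "L2 M (\<lambda>w. h (f w))"
  unfolding L2_def
proof (intro conjI)
  show m: "(\<lambda>w. h (f w)) \<in> borel_measurable M"
    using assms(2,3) borel_measurable_continuous_on unfolding L2_def by blast
  have b: "(norm (h x))\<^sup>2 \<le> 2 * a\<^sup>2 + 2 * b\<^sup>2 * (norm x)\<^sup>2" for x
  proof -
    have "(norm (h x))\<^sup>2 \<le> (a + b * norm x)\<^sup>2" by (rule power_mono[OF assms(4)]) simp
    also have "\<dots> \<le> 2 * a\<^sup>2 + 2 * (b * norm x)\<^sup>2" by (rule sq_sum_le)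
    finally show ?thesis by (simp add: power_mult_distrib)
  qed
  show "integrable M (\<lambda>w. (norm (h (f w)))\<^sup>2)"
    by (rule Bochner_Integration.integrable_bound[where f="\<lambda>w. 2 * a\<^sup>2 + 2 * b\<^sup>2 * (norm (f w))\<^sup>2"])
       (use assms m b in \<open>auto simp: L2_def finite_measure.integrable_const\<close>)
qed

lemma L2_comp_basis:
  fixes f :: "'w \<Rightarrow> 'd::euclidean_space"
  assumes "L2 M f" "b \<in> Basis"
  shows "L2 M (\<lambda>w. (f w \<bullet> b) *\<^sub>R b)"
proof -
  have "\<bar>f w \<bullet> b\<bar> \<le> norm (f w)" for w using assms(2) by (rule Basis_le_norm)
  hence "(f w \<bullet> b)\<^sup>2 \<le> (norm (f w))\<^sup>2" for w
    by (metis abs_ge_zero power2_abs power_mono)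
  thus ?thesis using assms unfolding L2_def
    by (auto intro!: Bochner_Integration.integrable_bound[where f="\<lambda>w. (norm (f w))\<^sup>2"])
qed

lemma L2_comp_prod_int:
  fixes f g :: "'w \<Rightarrow> 'd::euclidean_space"
  assumes "L2 M f" "L2 M g" "b \<in> Basis"
  shows "integrable M (\<lambda>w. (f w \<bullet> b) * (g w \<bullet> b))"
  using L2_inner[OF L2_comp_basis[OF assms(1,3)] L2_comp_basis[OF assms(2,3)]] assms(3) by (simp add: mult.commute)

lemma real_id:
  fixes \<gamma> a nA nB nD P Q :: real
  assumes "\<gamma> > 0" "a > 0"
  shows "(1/\<gamma>)*(nA - 2*(1/a)*P + (1/a)\<^sup>2*nD) + \<gamma>*a\<^sup>2*(nB + 2*(1/(\<gamma>*a\<^sup>2))*Q + (1/(\<gamma>*a\<^sup>2))\<^sup>2*nD)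
    = (1/\<gamma>)*nA + \<gamma>*a\<^sup>2*nB + 2*(Q - ((1/a)/\<gamma>)*P) + (2*(1/a)\<^sup>2/\<gamma>)*nD"
  using assms by (simp add: field_simps power2_eq_square)

lemma expand_step:
  fixes A B D :: "'d::euclidean_space"
  assumes g: "\<gamma> > 0" and w: "\<omega> \<ge> 0"
  shows "(1/\<gamma>) * (norm (A - (1/(1+\<omega>)) *\<^sub>R D))\<^sup>2 + \<gamma>*(1+\<omega>)\<^sup>2 * (norm (B + (1/(\<gamma>*(1+\<omega>)\<^sup>2)) *\<^sub>R D))\<^sup>2
       = (1/\<gamma>) * (norm A)\<^sup>2 + \<gamma>*(1+\<omega>)\<^sup>2 * (norm B)\<^sup>2 + 2 * ((B - ((1/(1+\<omega>))/\<gamma>) *\<^sub>R A) \<bullet> D)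
         + (2*(1/(1+\<omega>))\<^sup>2/\<gamma>) * (norm D)\<^sup>2"
proof -
  define p where "p = 1/(1+\<omega>)"
  define q where "q = 1/(\<gamma>*(1+\<omega>)\<^sup>2)"
  have e1: "(norm (A - p *\<^sub>R D))\<^sup>2 = (norm A)\<^sup>2 - 2 * p * (A \<bullet> D) + p\<^sup>2 * (norm D)\<^sup>2"
    by (simp add: power2_norm_eq_inner inner_diff_left inner_diff_right inner_commute algebra_simps) (simp add: power2_eq_square)
  have e2: "(norm (B + q *\<^sub>R D))\<^sup>2 = (norm B)\<^sup>2 + 2 * q * (B \<bullet> D) + q\<^sup>2 * (norm D)\<^sup>2"
    by (simp add: power2_norm_eq_inner inner_add_left inner_add_right inner_commute algebra_simps) (simp add: power2_eq_square)
  have w1: "1 + \<omega> > 0" using w by simp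
  show ?thesis
    unfolding p_def[symmetric] q_def[symmetric] e1 e2
    using real_id[OF g w1, of "(norm A)\<^sup>2" "A \<bullet> D" "(norm D)\<^sup>2" "(norm B)\<^sup>2" "B \<bullet> D"]
    by (simp add: p_def q_def inner_diff_left)
qed

lemma linear_repr:
  fixes h :: "'d::euclidean_space \<Rightarrow> 'e::real_vector"
  assumes "linear h" shows "h v = (\<Sum>b\<in>Basis. (v \<bullet> b) *\<^sub>R h b)"
proof -
  have "h v = h (\<Sum>b\<in>Basis. (v \<bullet> b) *\<^sub>R b)" by (simp add: euclidean_representation)
  also have "\<dots> = (\<Sum>b\<in>Basis. (v \<bullet> b) *\<^sub>R h b)"
    using assms by (simp add: linear_sum linear_scale)
  finally show ?thesis .
qed

locale rp =
  fixes M :: "'w measure"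
    and n :: nat
    and f :: "nat \<Rightarrow> 'd::euclidean_space \<Rightarrow> real"
    and g :: "nat \<Rightarrow> 'd \<Rightarrow> 'd"
    and \<mu> L \<gamma> \<omega> :: real
    and R :: "nat \<Rightarrow> 'w \<Rightarrow> 'd \<Rightarrow> 'd"
    and x0 u0 :: "nat \<Rightarrow> 'd"
    and xstar :: 'd
  assumes prob: "prob_space M"
    and n_pos: "n \<ge> 1"
    and mu_pos: "0 < \<mu>" and mu_le_L: "\<mu> \<le> L"
    and grad: "\<And>i x. i < n \<Longrightarrow> GDERIV (f i) x :> g i x"
    and sconvex: "\<And>i. i < n \<Longrightarrow> strongly_convex_on UNIV \<mu> (f i)"
    and smooth: "\<And>i x y. i < n \<Longrightarrow> norm (g i x - g i y) \<le> L * norm (x - y)"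
    and gamma_pos: "0 < \<gamma>" and gamma_lt: "\<gamma> < 2 / L"
    and omega_nonneg: "0 \<le> \<omega>"
    and u0_sum: "(\<Sum>i<n. u0 i) = 0"
    and R_linear: "\<And>t w. w \<in> space M \<Longrightarrow> linear (R t w)"
    and R_meas: "\<And>t v. (\<lambda>w. R t w v) \<in> borel_measurable M"
    and R_unbiased: "\<And>t y. y \<in> borel_measurable (rpfl_filt M n g \<gamma> \<omega> R x0 u0 t)
        \<Longrightarrow> integrable M (\<lambda>w. (norm (y w))\<^sup>2)
        \<Longrightarrow> AE w in M. \<forall>b\<in>Basis.
              real_cond_exp M (rpfl_filt M n g \<gamma> \<omega> R x0 u0 t) (\<lambda>w'. R t w' (y w') \<bullet> b) w = y w \<bullet> b"
    and R_variance: "\<And>t y. y \<in> borel_measurable (rpfl_filt M n g \<gamma> \<omega> R x0 u0 t)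
        \<Longrightarrow> AE w in M.
              nn_cond_exp M (rpfl_filt M n g \<gamma> \<omega> R x0 u0 t) (\<lambda>w'. ennreal ((norm (R t w' (y w') - y w'))\<^sup>2)) w
                \<le> ennreal (\<omega> * (norm (y w))\<^sup>2)"
    and xstar_min: "\<And>y. (\<Sum>i<n. f i xstar) \<le> (\<Sum>i<n. f i y)"
begin

definition "X t w = fst (rpfl n g \<gamma> \<omega> R x0 u0 t w)"
definition "U t w = snd (rpfl n g \<gamma> \<omega> R x0 u0 t w)"
definition "XH t w = rpfl_xhat g \<gamma> (rpfl n g \<gamma> \<omega> R x0 u0 t w)"
definition "F t = rpfl_filt M n g \<gamma> \<omega> R x0 u0 t"
definition "Y t w i = XH t w i - (1 / real n) *\<^sub>R (\<Sum>j<n. XH t w j)"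

lemma XH_eq: "XH t w i = X t w i - \<gamma> *\<^sub>R g i (X t w i) - \<gamma> *\<^sub>R U t w i"
  by (simp add: XH_def X_def U_def rpfl_xhat_def)

lemma X_Suc: "X (Suc t) w i = XH t w i - (1 / (1 + \<omega>)) *\<^sub>R (R t w (XH t w i) - (1 / real n) *\<^sub>R (\<Sum>j<n. R t w (XH t w j)))"
  by (simp add: X_def XH_def rpfl_step_def Let_def)

lemma U_Suc: "U (Suc t) w i = U t w i + (1 / (\<gamma> * (1 + \<omega>)\<^sup>2)) *\<^sub>R (R t w (XH t w i) - (1 / real n) *\<^sub>R (\<Sum>j<n. R t w (XH t w j)))"
  by (simp add: U_def XH_def rpfl_step_def Let_def)

lemma X_0: "X 0 w = x0" and U_0: "U 0 w = u0"
  by (simp_all add: X_def U_def)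

lemma R_Y: "w \<in> space M \<Longrightarrow> R t w (XH t w i) - (1 / real n) *\<^sub>R (\<Sum>j<n. R t w (XH t w j)) = R t w (Y t w i)"
  using R_linear[of w t] by (simp add: Y_def linear_diff linear_scale linear_sum)

lemma U_sum: "(\<Sum>i<n. U t w i) = 0"
proof (induction t)
  case 0 thus ?case by (simp add: U_0 u0_sum)
next
  case (Suc t)
  define S where "S = (\<Sum>j<n. R t w (XH t w j))"
  have "(\<Sum>i<n. R t w (XH t w i) - (1 / real n) *\<^sub>R S) = S - real n *\<^sub>R ((1 / real n) *\<^sub>R S)"
    by (simp only: sum_subtractf sum_constant_scaleR card_lessThan S_def)
  also have "\<dots> = 0" using n_pos by simp
  finally have d0: "(\<Sum>i<n. R t w (XH t w i) - (1 / real n) *\<^sub>R S) = 0" .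
  have "(\<Sum>i<n. U (Suc t) w i) = (\<Sum>i<n. U t w i) + (1 / (\<gamma> * (1 + \<omega>)\<^sup>2)) *\<^sub>R
      (\<Sum>i<n. R t w (XH t w i) - (1 / real n) *\<^sub>R S)"
    unfolding U_Suc S_def[symmetric] by (simp add: sum.distrib scaleR_sum_right)
  also have "\<dots> = 0" using Suc d0 by simp
  finally show ?case .
qed

lemma L_nonneg: "0 \<le> L" using mu_pos mu_le_L by simp

lemma g_cont: "i < n \<Longrightarrow> continuous_on UNIV (g i)"
  by (rule lipschitz_on_continuous_on[where L=L]) 
     (auto simp: lipschitz_on_def dist_norm L_nonneg smooth)

lemma g_bound: "i < n \<Longrightarrow> norm (g i x) \<le> norm (g i 0) + L * norm x"
  using smooth[of i x 0] norm_triangle_ineq2[of "g i x" "g i 0"] by simp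

lemma R_comp: "h \<in> borel_measurable M \<Longrightarrow> (\<lambda>w. R t w (h w)) \<in> borel_measurable M"
proof -
  assume h: "h \<in> borel_measurable M"
  have "(\<lambda>w. \<Sum>b\<in>Basis. (h w \<bullet> b) *\<^sub>R R t w b) \<in> borel_measurable M"
    using h R_meas by (auto intro!: borel_measurable_sum borel_measurable_scaleR borel_measurable_inner)
  moreover have "w \<in> space M \<Longrightarrow> R t w (h w) = (\<Sum>b\<in>Basis. (h w \<bullet> b) *\<^sub>R R t w b)" for w
    using linear_repr[OF R_linear] by blast
  ultimately show ?thesis using measurable_cong by (smt (verit, best))
qed

lemma meas_M: "\<forall>i<n. (\<lambda>w. X t w i) \<in> borel_measurable M \<and> (\<lambda>w. U t w i) \<in> borel_measurable M"
proof (induction t)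
  case 0 thus ?case by (simp add: X_0 U_0)
next
  case (Suc t)
  have XH: "(\<lambda>w. XH t w i) \<in> borel_measurable M" if "i < n" for i
    using Suc that unfolding XH_eq
    by (auto intro!: borel_measurable_diff borel_measurable_scaleR borel_measurable_continuous_on[OF g_cont])
  have RXH: "(\<lambda>w. R t w (XH t w i)) \<in> borel_measurable M" if "i < n" for i
    by (rule R_comp[OF XH[OF that]])
  show ?case
    unfolding X_Suc U_Suc using Suc XH RXH
    by (auto intro!: borel_measurable_diff borel_measurable_add borel_measurable_scaleR borel_measurable_sum)
qed


definition "GEN t = {(\<lambda>w. X s w i) -` B \<inter> space M | s i B. s \<le> t \<and> i < n \<and> B \<in> sets borel}
      \<union> {(\<lambda>w. U s w i) -` B \<inter> space M | s i B. s \<le> t \<and> i < n \<and> B \<in> sets borel}"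

lemma F_eq: "F t = sigma (space M) (GEN t)"
  unfolding F_def rpfl_filt_def GEN_def X_def U_def ..

lemma GEN_Pow: "GEN t \<subseteq> Pow (space M)"
  unfolding GEN_def by auto

lemma F_space[simp]: "space (F t) = space M"
  unfolding F_eq by (simp add: space_measure_of_conv)

lemma F_sets: "sets (F t) = sigma_sets (space M) (GEN t)"
  unfolding F_eq using GEN_Pow by (simp add: sets_measure_of)

lemma GEN_M: "GEN t \<subseteq> sets M"
  unfolding GEN_def using meas_M by (auto intro: measurable_sets)

lemma F_sub_sets: "sets (F t) \<subseteq> sets M"
  unfolding F_sets using GEN_M by (simp add: sets.sigma_sets_subset)

lemma F_subalg: "subalgebra M (F t)"
  unfolding subalgebra_def using F_sub_sets by simp

lemma F_sfs: "sigma_finite_subalgebra M (F t)"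
proof -
  have "finite_measure M" using prob by (simp add: prob_space_def)
  thus ?thesis
    by (intro finite_measure_subalgebra_is_sigma_finite finite_measure_subalgebra.intro)
       (simp_all add: finite_measure_subalgebra_axioms_def F_subalg)
qed

lemma F_to_M: "h \<in> borel_measurable (F t) \<Longrightarrow> h \<in> borel_measurable M"
  using F_subalg by (rule measurable_from_subalg)

lemma X_F: "s \<le> t \<Longrightarrow> i < n \<Longrightarrow> (\<lambda>w. X s w i) \<in> borel_measurable (F t)"
proof (rule measurableI)
  fix B :: "'d set" assume "s \<le> t" "i < n" "B \<in> sets borel"
  hence "(\<lambda>w. X s w i) -` B \<inter> space M \<in> GEN t" unfolding GEN_def by blast
  thus "(\<lambda>w. X s w i) -` B \<inter> space (F t) \<in> sets (F t)" unfolding F_sets by auto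
qed simp

lemma U_F: "s \<le> t \<Longrightarrow> i < n \<Longrightarrow> (\<lambda>w. U s w i) \<in> borel_measurable (F t)"
proof (rule measurableI)
  fix B :: "'d set" assume "s \<le> t" "i < n" "B \<in> sets borel"
  hence "(\<lambda>w. U s w i) -` B \<inter> space M \<in> GEN t" unfolding GEN_def by blast
  thus "(\<lambda>w. U s w i) -` B \<inter> space (F t) \<in> sets (F t)" unfolding F_sets by auto
qed simp

lemma XH_F: "i < n \<Longrightarrow> (\<lambda>w. XH t w i) \<in> borel_measurable (F t)"
  unfolding XH_eq using X_F[of t t i] U_F[of t t i]
  by (auto intro!: borel_measurable_diff borel_measurable_scaleR borel_measurable_continuous_on[OF g_cont])

lemma Y_F: "i < n \<Longrightarrow> (\<lambda>w. Y t w i) \<in> borel_measurable (F t)"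
  unfolding Y_def using XH_F
  by (auto intro!: borel_measurable_diff borel_measurable_scaleR borel_measurable_sum)


lemma compress:
  assumes yF: "y \<in> borel_measurable (F t)" and yL: "integrable M (\<lambda>w. (norm (y w))\<^sup>2)"
  shows "L2 M (\<lambda>w. R t w (y w))"
    and "(\<integral>w. (norm (R t w (y w) - y w))\<^sup>2 \<partial>M) \<le> \<omega> * (\<integral>w. (norm (y w))\<^sup>2 \<partial>M)"
    and "\<And>V :: 'w \<Rightarrow> 'd. V \<in> borel_measurable (F t) \<Longrightarrow> integrable M (\<lambda>w. (norm (V w))\<^sup>2) \<Longrightarrow>
           (\<integral>w. V w \<bullet> R t w (y w) \<partial>M) = (\<integral>w. V w \<bullet> y w \<partial>M)"
proof -
  interpret S: sigma_finite_subalgebra M "F t" by (rule F_sfs)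
  have yM: "y \<in> borel_measurable M" using yF by (rule F_to_M)
  have DM: "(\<lambda>w. R t w (y w)) \<in> borel_measurable M" using yM by (rule R_comp)
  define E where "E = (\<lambda>w. (norm (R t w (y w) - y w))\<^sup>2)"
  have EM: "E \<in> borel_measurable M" unfolding E_def using DM yM by measurable
  have "(\<integral>\<^sup>+w. ennreal (E w) \<partial>M) = (\<integral>\<^sup>+w. nn_cond_exp M (F t) (\<lambda>w. ennreal (E w)) w \<partial>M)"
    using S.nn_cond_exp_intg[of "\<lambda>_. 1" "\<lambda>w. ennreal (E w)"] EM by simp
  also have "\<dots> \<le> (\<integral>\<^sup>+w. ennreal (\<omega> * (norm (y w))\<^sup>2) \<partial>M)"
    by (rule nn_integral_mono_AE) (use R_variance[OF yF[unfolded F_def]] in \<open>simp add: E_def F_def\<close>)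
  also have "\<dots> = ennreal (\<integral>w. \<omega> * (norm (y w))\<^sup>2 \<partial>M)"
    by (rule nn_integral_eq_integral) (use yL omega_nonneg in auto)
  finally have nnE: "(\<integral>\<^sup>+w. ennreal (E w) \<partial>M) \<le> ennreal (\<integral>w. \<omega> * (norm (y w))\<^sup>2 \<partial>M)" .
  have intE: "integrable M E"
  proof (rule integrableI_bounded[OF EM])
    have "(\<integral>\<^sup>+w. ennreal (norm (E w)) \<partial>M) = (\<integral>\<^sup>+w. ennreal (E w) \<partial>M)"
      by (simp add: E_def)
    also have "\<dots> < \<infinity>" using nnE by (simp add: le_less_trans)
    finally show "(\<integral>\<^sup>+w. ennreal (norm (E w)) \<partial>M) < \<infinity>" .
  qed
  have "ennreal (\<integral>w. E w \<partial>M) \<le> ennreal (\<integral>w. \<omega> * (norm (y w))\<^sup>2 \<partial>M)"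
    using nnE nn_integral_eq_integral[OF intE] by (simp add: E_def)
  moreover have "0 \<le> (\<integral>w. \<omega> * (norm (y w))\<^sup>2 \<partial>M)" using omega_nonneg by simp
  ultimately show "(\<integral>w. (norm (R t w (y w) - y w))\<^sup>2 \<partial>M) \<le> \<omega> * (\<integral>w. (norm (y w))\<^sup>2 \<partial>M)"
    by (simp add: E_def)
  have L2y: "L2 M y" using yM yL by (simp add: L2_def)
  have "L2 M (\<lambda>w. R t w (y w) - y w)" using DM yM intE by (simp add: L2_def E_def)
  from L2_add[OF this L2y] show L2D: "L2 M (\<lambda>w. R t w (y w))" by simp
  fix V :: "'w \<Rightarrow> 'd" assume VF: "V \<in> borel_measurable (F t)" and VL: "integrable M (\<lambda>w. (norm (V w))\<^sup>2)"
  have L2V: "L2 M V" using F_to_M[OF VF] VL by (simp add: L2_def)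
  have AEu: "AE w in M. \<forall>b\<in>Basis. real_cond_exp M (F t) (\<lambda>w'. R t w' (y w') \<bullet> b) w = y w \<bullet> b"
    using R_unbiased[OF yF[unfolded F_def] yL] by (simp add: F_def)
  have comp: "(\<integral>w. (V w \<bullet> b) * (R t w (y w) \<bullet> b) \<partial>M) = (\<integral>w. (V w \<bullet> b) * (y w \<bullet> b) \<partial>M)"
    if b: "b \<in> Basis" for b
  proof -
    have "(\<integral>w. (V w \<bullet> b) * (R t w (y w) \<bullet> b) \<partial>M)
        = (\<integral>w. (V w \<bullet> b) * real_cond_exp M (F t) (\<lambda>w'. R t w' (y w') \<bullet> b) w \<partial>M)"
      by (rule S.real_cond_exp_intg(2)[symmetric])
         (use L2_comp_prod_int[OF L2V L2D b] VF DM in auto)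
    also have "\<dots> = (\<integral>w. (V w \<bullet> b) * (y w \<bullet> b) \<partial>M)"
    proof (rule integral_cong_AE)
      show "(\<lambda>w. (V w \<bullet> b) * real_cond_exp M (F t) (\<lambda>w'. R t w' (y w') \<bullet> b) w) \<in> borel_measurable M"
        using F_to_M[OF VF] by measurable
      show "(\<lambda>w. (V w \<bullet> b) * (y w \<bullet> b)) \<in> borel_measurable M" using F_to_M[OF VF] yM by measurable
      show "AE w in M. (V w \<bullet> b) * real_cond_exp M (F t) (\<lambda>w'. R t w' (y w') \<bullet> b) w = (V w \<bullet> b) * (y w \<bullet> b)"
        using AEu b by auto
    qed
    finally show ?thesis .
  qed
  have "(\<integral>w. V w \<bullet> R t w (y w) \<partial>M) = (\<integral>w. (\<Sum>b\<in>Basis. (V w \<bullet> b) * (R t w (y w) \<bullet> b)) \<partial>M)"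
    by (intro Bochner_Integration.integral_cong refl euclidean_inner)
  also have "\<dots> = (\<Sum>b\<in>Basis. \<integral>w. (V w \<bullet> b) * (R t w (y w) \<bullet> b) \<partial>M)"
    by (rule Bochner_Integration.integral_sum) (use L2_comp_prod_int[OF L2V L2D] in auto)
  also have "\<dots> = (\<Sum>b\<in>Basis. \<integral>w. (V w \<bullet> b) * (y w \<bullet> b) \<partial>M)"
    using comp by simp
  also have "\<dots> = (\<integral>w. (\<Sum>b\<in>Basis. (V w \<bullet> b) * (y w \<bullet> b)) \<partial>M)"
    by (rule Bochner_Integration.integral_sum[symmetric]) (use L2_comp_prod_int[OF L2V L2y] in auto)
  also have "\<dots> = (\<integral>w. V w \<bullet> y w \<partial>M)"
    by (intro Bochner_Integration.integral_cong refl euclidean_inner[symmetric])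
  finally show "(\<integral>w. V w \<bullet> R t w (y w) \<partial>M) = (\<integral>w. V w \<bullet> y w \<partial>M)" .
qed


definition "c1 = max ((1 - \<gamma> * \<mu>)\<^sup>2) ((\<gamma> * L - 1)\<^sup>2)"
definition "cc = max ((1 - \<gamma> * \<mu>)\<^sup>2) (max ((\<gamma> * L - 1)\<^sup>2) (1 - 1 / (1 + \<omega>)\<^sup>2))"

lemma grad_contr:
  assumes "i < n"
  shows "(norm ((x - \<gamma> *\<^sub>R g i x) - (y - \<gamma> *\<^sub>R g i y)))\<^sup>2 \<le> c1 * (norm (x - y))\<^sup>2"
proof -
  have gr: "\<And>z. GDERIV (f i) z :> g i z" using grad assms by blast
  have "0 \<le> (g i x - g i y - \<mu> *\<^sub>R (x - y)) \<bullet> (L *\<^sub>R (x - y) - (g i x - g i y))"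
    by (rule coco[OF lower_quad[OF gr sconvex[OF assms]] upper_quad[OF gr smooth[OF assms]] mu_le_L])
  from contract[OF this gamma_pos mu_le_L] show ?thesis
    by (simp add: c1_def algebra_simps)
qed

lemma sum_g_zero: "(\<Sum>i<n. g i xstar) = 0"
proof -
  define v where "v = (\<Sum>i<n. g i xstar)"
  have gr: "GDERIV (\<lambda>z. \<Sum>i<n. f i z) z :> (\<Sum>i<n. g i z)" for z
  proof -
    have "((\<lambda>z. \<Sum>i<n. f i z) has_derivative (\<lambda>h. \<Sum>i<n. h \<bullet> g i z)) (at z)"
      by (rule has_derivative_sum) (use grad in \<open>auto simp: gderiv_def\<close>)
    thus ?thesis by (simp add: gderiv_def inner_sum_right)
  qed
  have D: "((\<lambda>t. \<Sum>i<n. f i (xstar + t *\<^sub>R v)) has_real_derivative ((\<Sum>i<n. g i (xstar + 0 *\<^sub>R v)) \<bullet> v)) (at 0)"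
    by (rule line_deriv[where f="\<lambda>z. \<Sum>i<n. f i z", OF gr])
  have "(\<Sum>i<n. g i (xstar + 0 *\<^sub>R v)) \<bullet> v = 0"
    by (rule DERIV_local_min[OF D, of 1]) (use xstar_min in auto)
  hence "v \<bullet> v = 0" by (simp add: v_def)
  thus ?thesis by (simp add: v_def)
qed

lemma pathwise:
  fixes x u xh y :: "nat \<Rightarrow> 'd"
  assumes usum: "(\<Sum>i<n. u i) = 0"
  assumes xh_def: "\<And>i. xh i = x i - \<gamma> *\<^sub>R g i (x i) - \<gamma> *\<^sub>R u i"
  assumes y_def: "\<And>i. y i = xh i - (1 / real n) *\<^sub>R (\<Sum>j<n. xh j)"
  shows "(\<Sum>i<n. (1/\<gamma>) * (norm (xh i - xstar))\<^sup>2 + \<gamma> * (1 + \<omega>)\<^sup>2 * (norm (u i + g i xstar))\<^sup>2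
            + 2 * (((u i + g i xstar) - ((1 / (1 + \<omega>)) / \<gamma>) *\<^sub>R (xh i - xstar)) \<bullet> y i)
            + (2 * (1 / (1 + \<omega>)) / \<gamma>) * (norm (y i))\<^sup>2)
         \<le> cc * (\<Sum>i<n. (1/\<gamma>) * (norm (x i - xstar))\<^sup>2 + \<gamma> * (1 + \<omega>)\<^sup>2 * (norm (u i - - g i xstar))\<^sup>2)"
proof -
  define p where "p = 1 / (1 + \<omega>)"
  define A where "A = (\<lambda>i. xh i - xstar)"
  define B where "B = (\<lambda>i. u i + g i xstar)"
  define z where "z = (1 / real n) *\<^sub>R (\<Sum>j<n. xh j) - xstar"
  have Ay: "A i = y i + z" for i by (simp add: A_def y_def z_def)
  have ysum: "(\<Sum>i<n. y i) = 0"
  proof -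
    have "(\<Sum>i<n. y i) = (\<Sum>j<n. xh j) - real n *\<^sub>R ((1 / real n) *\<^sub>R (\<Sum>j<n. xh j))"
      by (simp only: y_def sum_subtractf sum_constant_scaleR card_lessThan)
    also have "\<dots> = 0" using n_pos by simp
    finally show ?thesis .
  qed
  have Bsum: "(\<Sum>i<n. B i) = 0" using usum sum_g_zero by (simp add: B_def sum.distrib)
  have s1: "(\<Sum>i<n. A i \<bullet> y i) = (\<Sum>i<n. (norm (y i))\<^sup>2)"
  proof -
    have "(\<Sum>i<n. A i \<bullet> y i) = (\<Sum>i<n. (norm (y i))\<^sup>2) + z \<bullet> (\<Sum>i<n. y i)"
      by (simp add: Ay inner_add_left sum.distrib inner_sum_right power2_norm_eq_inner)
    thus ?thesis using ysum by simp
  qed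
  have s2: "(\<Sum>i<n. B i \<bullet> y i) = (\<Sum>i<n. B i \<bullet> A i)"
  proof -
    have "(\<Sum>i<n. B i \<bullet> A i) = (\<Sum>i<n. B i \<bullet> y i) + (\<Sum>i<n. B i) \<bullet> z"
      by (simp add: Ay inner_add_right sum.distrib inner_sum_left)
    thus ?thesis using Bsum by simp
  qed
  have WAB: "A i + \<gamma> *\<^sub>R B i = (x i - \<gamma> *\<^sub>R g i (x i)) - (xstar - \<gamma> *\<^sub>R g i xstar)" for i
    by (simp add: A_def B_def xh_def algebra_simps)
  have "(\<Sum>i<n. (1/\<gamma>) * (norm (xh i - xstar))\<^sup>2 + \<gamma> * (1 + \<omega>)\<^sup>2 * (norm (u i + g i xstar))\<^sup>2
            + 2 * (((u i + g i xstar) - ((1 / (1 + \<omega>)) / \<gamma>) *\<^sub>R (xh i - xstar)) \<bullet> y i)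
            + (2 * (1 / (1 + \<omega>)) / \<gamma>) * (norm (y i))\<^sup>2)
      = (\<Sum>i<n. (1/\<gamma>) * (norm (A i))\<^sup>2 + \<gamma> * (1 + \<omega>)\<^sup>2 * (norm (B i))\<^sup>2)
        + 2 * (\<Sum>i<n. B i \<bullet> y i) - (2 * p / \<gamma>) * (\<Sum>i<n. A i \<bullet> y i) + (2 * p / \<gamma>) * (\<Sum>i<n. (norm (y i))\<^sup>2)"
    by (simp add: A_def B_def p_def inner_diff_left sum.distrib sum_subtractf sum_distrib_left sum_divide_distrib algebra_simps)
  also have "\<dots> = (\<Sum>i<n. (1/\<gamma>) * (norm (A i))\<^sup>2 + \<gamma> * (1 + \<omega>)\<^sup>2 * (norm (B i))\<^sup>2 + 2 * (B i \<bullet> A i))"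
    using s1 s2 by (simp add: sum.distrib sum_distrib_left)
  also have "\<dots> = (\<Sum>i<n. (1/\<gamma>) * (norm (A i + \<gamma> *\<^sub>R B i))\<^sup>2 + (\<gamma> * (1 + \<omega>)\<^sup>2 - \<gamma>) * (norm (B i))\<^sup>2)"
  proof (rule sum.cong[OF refl])
    fix i
    show "(1/\<gamma>) * (norm (A i))\<^sup>2 + \<gamma> * (1 + \<omega>)\<^sup>2 * (norm (B i))\<^sup>2 + 2 * (B i \<bullet> A i)
        = (1/\<gamma>) * (norm (A i + \<gamma> *\<^sub>R B i))\<^sup>2 + (\<gamma> * (1 + \<omega>)\<^sup>2 - \<gamma>) * (norm (B i))\<^sup>2"
    proof -
      have e: "(norm (A i + \<gamma> *\<^sub>R B i))\<^sup>2 = (norm (A i))\<^sup>2 + 2 * \<gamma> * (B i \<bullet> A i) + \<gamma>\<^sup>2 * (norm (B i))\<^sup>2"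
        by (simp add: power2_norm_eq_inner inner_add_left inner_add_right inner_commute algebra_simps) (simp add: power2_eq_square)
      show ?thesis unfolding e using gamma_pos by (simp add: field_simps power2_eq_square)
    qed
  qed
  also have "\<dots> \<le> (\<Sum>i<n. cc * ((1/\<gamma>) * (norm (x i - xstar))\<^sup>2 + \<gamma> * (1 + \<omega>)\<^sup>2 * (norm (u i - - g i xstar))\<^sup>2))"
  proof (rule sum_mono)
    fix i assume i: "i \<in> {..<n}"
    have "(norm (A i + \<gamma> *\<^sub>R B i))\<^sup>2 \<le> c1 * (norm (x i - xstar))\<^sup>2"
      unfolding WAB using grad_contr i by simp
    hence 1: "(1/\<gamma>) * (norm (A i + \<gamma> *\<^sub>R B i))\<^sup>2 \<le> cc * ((1/\<gamma>) * (norm (x i - xstar))\<^sup>2)"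
    proof -
      assume h: "(norm (A i + \<gamma> *\<^sub>R B i))\<^sup>2 \<le> c1 * (norm (x i - xstar))\<^sup>2"
      have "c1 \<le> cc" by (simp add: c1_def cc_def)
      hence "c1 * (norm (x i - xstar))\<^sup>2 \<le> cc * (norm (x i - xstar))\<^sup>2" by (simp add: mult_right_mono)
      with h have "(norm (A i + \<gamma> *\<^sub>R B i))\<^sup>2 \<le> cc * (norm (x i - xstar))\<^sup>2" by simp
      thus ?thesis using gamma_pos by (simp add: divide_right_mono)
    qed
    have "\<gamma> * (1 + \<omega>)\<^sup>2 - \<gamma> = (1 - 1 / (1 + \<omega>)\<^sup>2) * (\<gamma> * (1 + \<omega>)\<^sup>2)"
      using omega_nonneg by (simp add: field_simps)
    also have "\<dots> \<le> cc * (\<gamma> * (1 + \<omega>)\<^sup>2)"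
      by (rule mult_right_mono) (use gamma_pos in \<open>simp_all add: cc_def\<close>)
    finally have h: "\<gamma> * (1 + \<omega>)\<^sup>2 - \<gamma> \<le> cc * (\<gamma> * (1 + \<omega>)\<^sup>2)" .
    have "(\<gamma> * (1 + \<omega>)\<^sup>2 - \<gamma>) * (norm (B i))\<^sup>2 \<le> cc * (\<gamma> * (1 + \<omega>)\<^sup>2) * (norm (B i))\<^sup>2"
      by (rule mult_right_mono[OF h]) simp
    hence 2: "(\<gamma> * (1 + \<omega>)\<^sup>2 - \<gamma>) * (norm (B i))\<^sup>2 \<le> cc * (\<gamma> * (1 + \<omega>)\<^sup>2 * (norm (u i - - g i xstar))\<^sup>2)"
      by (simp add: B_def mult.assoc)
    show "(1/\<gamma>) * (norm (A i + \<gamma> *\<^sub>R B i))\<^sup>2 + (\<gamma> * (1 + \<omega>)\<^sup>2 - \<gamma>) * (norm (B i))\<^sup>2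
        \<le> cc * ((1/\<gamma>) * (norm (x i - xstar))\<^sup>2 + \<gamma> * (1 + \<omega>)\<^sup>2 * (norm (u i - - g i xstar))\<^sup>2)"
      using 1 2 by (simp add: distrib_left)
  qed
  also have "\<dots> = cc * (\<Sum>i<n. (1/\<gamma>) * (norm (x i - xstar))\<^sup>2 + \<gamma> * (1 + \<omega>)\<^sup>2 * (norm (u i - - g i xstar))\<^sup>2)"
    by (simp add: sum_distrib_left)
  finally show ?thesis .
qed


lemma fmM: "finite_measure M" using prob by (simp add: prob_space_def)

lemma L2_cong: "(\<And>w. w \<in> space M \<Longrightarrow> h w = h' w) \<Longrightarrow> L2 M h \<Longrightarrow> L2 M h'"
  unfolding L2_def
  by (metis (no_types, lifting) Bochner_Integration.integrable_cong measurable_cong)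

lemma L2_F: "L2 M h \<Longrightarrow> integrable M (\<lambda>w. (norm (h w))\<^sup>2)" by (simp add: L2_def)

lemma XH_L2: "(\<forall>i<n. L2 M (\<lambda>w. X t w i) \<and> L2 M (\<lambda>w. U t w i)) \<Longrightarrow> i < n \<Longrightarrow> L2 M (\<lambda>w. XH t w i)"
  unfolding XH_eq
  by (intro L2_diff L2_scaleR L2_comp[OF fmM _ g_cont g_bound]) auto

lemma Y_L2: "(\<forall>i<n. L2 M (\<lambda>w. X t w i) \<and> L2 M (\<lambda>w. U t w i)) \<Longrightarrow> i < n \<Longrightarrow> L2 M (\<lambda>w. Y t w i)"
  unfolding Y_def
  by (intro L2_diff L2_scaleR L2_sum[OF fmM] XH_L2) auto

lemma D_L2: "(\<forall>i<n. L2 M (\<lambda>w. X t w i) \<and> L2 M (\<lambda>w. U t w i)) \<Longrightarrow> i < n \<Longrightarrow> L2 M (\<lambda>w. R t w (Y t w i))"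
  by (rule compress(1)[OF Y_F L2_F[OF Y_L2]])

lemma L2_iter: "\<forall>i<n. L2 M (\<lambda>w. X t w i) \<and> L2 M (\<lambda>w. U t w i)"
proof (induction t)
  case 0 thus ?case by (simp add: X_0 U_0 L2_const[OF fmM])
next
  case (Suc t)
  show ?case
  proof (intro allI impI conjI)
    fix i assume i: "i < n"
    show "L2 M (\<lambda>w. X (Suc t) w i)"
      by (rule L2_cong[OF _ L2_diff[OF XH_L2[OF Suc i] L2_scaleR[OF D_L2[OF Suc i], of "1 / (1 + \<omega>)"]]])
         (simp add: X_Suc R_Y)
    have UL: "L2 M (\<lambda>w. U t w i)" using Suc i by blast
    show "L2 M (\<lambda>w. U (Suc t) w i)"
      by (rule L2_cong[OF _ L2_add[OF UL L2_scaleR[OF D_L2[OF Suc i], of "1 / (\<gamma> * (1 + \<omega>)\<^sup>2)"]]])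
         (simp add: U_Suc R_Y)
  qed
qed

definition "Psi t w = (\<Sum>i<n. (1 / \<gamma>) * (norm (X t w i - xstar))\<^sup>2 + \<gamma> * (1 + \<omega>)\<^sup>2 * (norm (U t w i - - g i xstar))\<^sup>2)"

lemma Psi_nonneg: "0 \<le> Psi t w"
  unfolding Psi_def using gamma_pos by (intro sum_nonneg add_nonneg_nonneg mult_nonneg_nonneg) auto

lemma Psi_int: "integrable M (Psi t)"
proof -
  have "integrable M (\<lambda>w. \<Sum>i<n. (1 / \<gamma>) * (norm (X t w i - xstar))\<^sup>2 + \<gamma> * (1 + \<omega>)\<^sup>2 * (norm (U t w i - - g i xstar))\<^sup>2)"
    using L2_iter[of t]
    by (intro Bochner_Integration.integrable_sum Bochner_Integration.integrable_add integrable_mult_right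
          L2_F L2_diff L2_const[OF fmM]) auto
  thus ?thesis unfolding Psi_def .
qed

lemma Psi_meas: "Psi t \<in> borel_measurable M"
  using Psi_int by (rule borel_measurable_integrable)


lemma step: "(\<integral>w. Psi (Suc t) w \<partial>M) \<le> cc * (\<integral>w. Psi t w \<partial>M)"
proof -
  have IH: "\<forall>i<n. L2 M (\<lambda>w. X t w i) \<and> L2 M (\<lambda>w. U t w i)" by (rule L2_iter)
  define p where "p = 1 / (1 + \<omega>)"
  define q where "q = 1 / (\<gamma> * (1 + \<omega>)\<^sup>2)"
  define k where "k = 2 * p\<^sup>2 / \<gamma>"
  define A where "A i w = XH t w i - xstar" for i w
  define B where "B i w = U t w i + g i xstar" for i w
  define D where "D i w = R t w (Y t w i)" for i w
  define V where "V i w = B i w - (p / \<gamma>) *\<^sub>R A i w" for i w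
  define P where "P i w = (1/\<gamma>) * (norm (A i w))\<^sup>2 + \<gamma> * (1 + \<omega>)\<^sup>2 * (norm (B i w))\<^sup>2" for i w
  have w1: "1 + \<omega> > 0" using omega_nonneg by simp
  have LA: "L2 M (A i)" if "i < n" for i
    unfolding A_def by (intro L2_diff XH_L2[OF IH that] L2_const[OF fmM])
  have LB: "L2 M (B i)" if "i < n" for i
    unfolding B_def using IH that by (intro L2_add L2_const[OF fmM]) auto
  have LD: "L2 M (D i)" if "i < n" for i
    unfolding D_def by (rule D_L2[OF IH that])
  have LY: "L2 M (\<lambda>w. Y t w i)" if "i < n" for i by (rule Y_L2[OF IH that])
  have LV: "L2 M (V i)" if "i < n" for i
    unfolding V_def by (intro L2_diff L2_scaleR LA LB that)
  have FA: "A i \<in> borel_measurable (F t)" if "i < n" for i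
    unfolding A_def using XH_F[OF that] by measurable
  have FB: "B i \<in> borel_measurable (F t)" if "i < n" for i
    unfolding B_def using U_F[OF order.refl that] by measurable
  have FV: "V i \<in> borel_measurable (F t)" if "i < n" for i
    unfolding V_def using FA[OF that] FB[OF that] by measurable
  have IP: "integrable M (P i)" if "i < n" for i
    unfolding P_def using LA[OF that] LB[OF that]
    by (intro Bochner_Integration.integrable_add integrable_mult_right L2_F)
  have path: "Psi (Suc t) w = (\<Sum>i<n. P i w + 2 * (V i w \<bullet> D i w) + k * (norm (D i w))\<^sup>2)"
    if w: "w \<in> space M" for w
    unfolding Psi_def
  proof (rule sum.cong[OF refl])
    fix i assume "i \<in> {..<n}"
    have ex0: "X (Suc t) w i = XH t w i - (1/(1+\<omega>)) *\<^sub>R D i w"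
      by (simp only: X_Suc R_Y[OF w] D_def)
    have ex: "X (Suc t) w i - xstar = A i w - (1/(1+\<omega>)) *\<^sub>R D i w"
      unfolding ex0 A_def by (simp add: algebra_simps)
    have eu0: "U (Suc t) w i = U t w i + (1/(\<gamma>*(1+\<omega>)\<^sup>2)) *\<^sub>R D i w"
      by (simp only: U_Suc R_Y[OF w] D_def)
    have eu: "U (Suc t) w i - - g i xstar = B i w + (1/(\<gamma>*(1+\<omega>)\<^sup>2)) *\<^sub>R D i w"
      unfolding eu0 B_def by (simp add: algebra_simps)
    show "(1/\<gamma>) * (norm (X (Suc t) w i - xstar))\<^sup>2 + \<gamma> * (1 + \<omega>)\<^sup>2 * (norm (U (Suc t) w i - - g i xstar))\<^sup>2
        = P i w + 2 * (V i w \<bullet> D i w) + k * (norm (D i w))\<^sup>2"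
      unfolding ex eu expand_step[OF gamma_pos omega_nonneg]
      by (simp only: P_def V_def k_def p_def)
  qed
  have bound: "(\<integral>w. P i w + 2 * (V i w \<bullet> D i w) + k * (norm (D i w))\<^sup>2 \<partial>M)
      \<le> (\<integral>w. P i w + 2 * (V i w \<bullet> Y t w i) + (2 * p / \<gamma>) * (norm (Y t w i))\<^sup>2 \<partial>M)"
    if i: "i < n" for i
  proof -
    note c = compress[OF Y_F[OF i] L2_F[OF LY[OF i]]]
    have VD: "(\<integral>w. V i w \<bullet> D i w \<partial>M) = (\<integral>w. V i w \<bullet> Y t w i \<partial>M)"
      unfolding D_def by (rule c(3)[OF FV[OF i] L2_F[OF LV[OF i]]])
    have YD: "(\<integral>w. Y t w i \<bullet> D i w \<partial>M) = (\<integral>w. (norm (Y t w i))\<^sup>2 \<partial>M)"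
      unfolding D_def using c(3)[OF Y_F[OF i] L2_F[OF LY[OF i]]] by (simp add: power2_norm_eq_inner)
    have var: "(\<integral>w. (norm (D i w - Y t w i))\<^sup>2 \<partial>M) \<le> \<omega> * (\<integral>w. (norm (Y t w i))\<^sup>2 \<partial>M)"
      unfolding D_def by (rule c(2))
    have nD: "(norm (D i w))\<^sup>2 = (norm (D i w - Y t w i))\<^sup>2 + 2 * (Y t w i \<bullet> D i w) - (norm (Y t w i))\<^sup>2" for w
      by (simp add: power2_norm_eq_inner inner_diff_left inner_diff_right inner_commute)
    have iDY: "integrable M (\<lambda>w. (norm (D i w - Y t w i))\<^sup>2)"
      by (rule L2_F[OF L2_diff[OF LD[OF i] LY[OF i]]])
    have iYD: "integrable M (\<lambda>w. Y t w i \<bullet> D i w)" by (rule L2_inner[OF LY[OF i] LD[OF i]])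
    have iY: "integrable M (\<lambda>w. (norm (Y t w i))\<^sup>2)" by (rule L2_F[OF LY[OF i]])
    have intD: "(\<integral>w. (norm (D i w))\<^sup>2 \<partial>M) \<le> (1 + \<omega>) * (\<integral>w. (norm (Y t w i))\<^sup>2 \<partial>M)"
    proof -
      have "(\<integral>w. (norm (D i w))\<^sup>2 \<partial>M) = (\<integral>w. (norm (D i w - Y t w i))\<^sup>2 + 2 * (Y t w i \<bullet> D i w) - (norm (Y t w i))\<^sup>2 \<partial>M)"
        by (simp only: nD)
      also have "\<dots> = (\<integral>w. (norm (D i w - Y t w i))\<^sup>2 \<partial>M) + 2 * (\<integral>w. Y t w i \<bullet> D i w \<partial>M) - (\<integral>w. (norm (Y t w i))\<^sup>2 \<partial>M)"
        using iDY iYD iY by simp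
      also have "\<dots> \<le> (1 + \<omega>) * (\<integral>w. (norm (Y t w i))\<^sup>2 \<partial>M)"
        using var YD by (simp add: algebra_simps)
      finally show ?thesis .
    qed
    have iVD: "integrable M (\<lambda>w. V i w \<bullet> D i w)" by (rule L2_inner[OF LV[OF i] LD[OF i]])
    have iVY: "integrable M (\<lambda>w. V i w \<bullet> Y t w i)" by (rule L2_inner[OF LV[OF i] LY[OF i]])
    have iD: "integrable M (\<lambda>w. (norm (D i w))\<^sup>2)" by (rule L2_F[OF LD[OF i]])
    have "(\<integral>w. P i w + 2 * (V i w \<bullet> D i w) + k * (norm (D i w))\<^sup>2 \<partial>M)
        = (\<integral>w. P i w \<partial>M) + 2 * (\<integral>w. V i w \<bullet> D i w \<partial>M) + k * (\<integral>w. (norm (D i w))\<^sup>2 \<partial>M)"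
      using IP[OF i] iVD iD by simp
    also have "\<dots> \<le> (\<integral>w. P i w \<partial>M) + 2 * (\<integral>w. V i w \<bullet> Y t w i \<partial>M) + k * ((1 + \<omega>) * (\<integral>w. (norm (Y t w i))\<^sup>2 \<partial>M))"
      unfolding VD using intD gamma_pos by (intro add_left_mono mult_left_mono) (auto simp: k_def)
    also have "k * (1 + \<omega>) = 2 * p / \<gamma>"
    proof -
      have pw1: "p * (1 + \<omega>) = 1" using w1 by (simp add: p_def)
      have "k * (1 + \<omega>) = (2 / \<gamma>) * p * (p * (1 + \<omega>))" by (simp add: k_def power2_eq_square)
      also have "\<dots> = 2 * p / \<gamma>" using pw1 by simp
      finally show ?thesis .
    qed
    hence "k * ((1 + \<omega>) * (\<integral>w. (norm (Y t w i))\<^sup>2 \<partial>M)) = (2 * p / \<gamma>) * (\<integral>w. (norm (Y t w i))\<^sup>2 \<partial>M)"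
      by (metis mult.assoc)
    also have "(\<integral>w. P i w \<partial>M) + 2 * (\<integral>w. V i w \<bullet> Y t w i \<partial>M) + (2 * p / \<gamma>) * (\<integral>w. (norm (Y t w i))\<^sup>2 \<partial>M)
        = (\<integral>w. P i w + 2 * (V i w \<bullet> Y t w i) + (2 * p / \<gamma>) * (norm (Y t w i))\<^sup>2 \<partial>M)"
      using IP[OF i] iVY iY by simp
    finally show ?thesis by simp
  qed
  have intT: "integrable M (\<lambda>w. P i w + 2 * (V i w \<bullet> D i w) + k * (norm (D i w))\<^sup>2)" if i: "i < n" for i
    using IP[OF i] L2_inner[OF LV[OF i] LD[OF i]] L2_F[OF LD[OF i]] by simp
  have intPhi: "integrable M (\<lambda>w. P i w + 2 * (V i w \<bullet> Y t w i) + (2 * p / \<gamma>) * (norm (Y t w i))\<^sup>2)" if i: "i < n" for i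
    using IP[OF i] L2_inner[OF LV[OF i] LY[OF i]] L2_F[OF LY[OF i]] by simp
  have pw: "(\<Sum>i<n. P i w + 2 * (V i w \<bullet> Y t w i) + (2 * p / \<gamma>) * (norm (Y t w i))\<^sup>2) \<le> cc * Psi t w" for w
    using pathwise[OF U_sum[of t w] XH_eq Y_def]
    by (simp only: P_def V_def A_def B_def Psi_def p_def)
  have "(\<integral>w. Psi (Suc t) w \<partial>M) = (\<integral>w. (\<Sum>i<n. P i w + 2 * (V i w \<bullet> D i w) + k * (norm (D i w))\<^sup>2) \<partial>M)"
    by (rule Bochner_Integration.integral_cong[OF refl path])
  also have "\<dots> = (\<Sum>i<n. \<integral>w. P i w + 2 * (V i w \<bullet> D i w) + k * (norm (D i w))\<^sup>2 \<partial>M)"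
    by (rule Bochner_Integration.integral_sum) (use intT in auto)
  also have "\<dots> \<le> (\<Sum>i<n. \<integral>w. P i w + 2 * (V i w \<bullet> Y t w i) + (2 * p / \<gamma>) * (norm (Y t w i))\<^sup>2 \<partial>M)"
    by (rule sum_mono) (use bound in auto)
  also have "\<dots> = (\<integral>w. (\<Sum>i<n. P i w + 2 * (V i w \<bullet> Y t w i) + (2 * p / \<gamma>) * (norm (Y t w i))\<^sup>2) \<partial>M)"
    by (rule Bochner_Integration.integral_sum[symmetric]) (use intPhi in auto)
  also have "\<dots> \<le> (\<integral>w. cc * Psi t w \<partial>M)"
  proof (rule integral_mono[OF _ _ pw])
    show "integrable M (\<lambda>w. \<Sum>i<n. P i w + 2 * (V i w \<bullet> Y t w i) + 2 * p / \<gamma> * (norm (Y t w i))\<^sup>2)"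
      by (rule Bochner_Integration.integrable_sum) (use intPhi in blast)
    show "integrable M (\<lambda>w. cc * Psi t w)" by (rule integrable_mult_right[OF Psi_int])
  qed
  also have "\<dots> = cc * (\<integral>w. Psi t w \<partial>M)" by simp
  finally show ?thesis .
qed


lemma sq_lt1: "0 < (a::real) \<Longrightarrow> a < 2 \<Longrightarrow> (1 - a)\<^sup>2 < 1"
proof -
  assume "0 < a" "a < 2"
  hence "0 < a * (2 - a)" by simp
  moreover have "(1 - a)\<^sup>2 = 1 - a * (2 - a)" by (simp add: power2_eq_square algebra_simps)
  ultimately show ?thesis by simp
qed

lemma cc_nonneg: "0 \<le> cc" by (simp add: cc_def le_max_iff_disj)

lemma cc_lt1: "cc < 1"
proof -
  have L0: "0 < L" using mu_pos mu_le_L by simp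
  have gL: "\<gamma> * L < 2" using gamma_lt L0 by (simp add: field_simps)
  have gm: "\<gamma> * \<mu> \<le> \<gamma> * L" using mu_le_L gamma_pos by simp
  have gm0: "0 < \<gamma> * \<mu>" using gamma_pos mu_pos by simp
  have gL0: "0 < \<gamma> * L" using gamma_pos L0 by simp
  have a: "(1 - \<gamma> * \<mu>)\<^sup>2 < 1"
    using gm0 gm gL by (intro sq_lt1) auto
  have b: "(\<gamma> * L - 1)\<^sup>2 < 1"
    using sq_lt1[of "\<gamma> * L"] gL0 gL by (simp add: power2_commute)
  have c: "1 - 1 / (1 + \<omega>)\<^sup>2 < 1" using omega_nonneg by simp
  show ?thesis using a b c by (simp add: cc_def)
qed

lemma exp_bound: "(\<integral>w. Psi t w \<partial>M) \<le> cc ^ t * Psi 0 w0"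
proof (induction t)
  case 0
  have "(\<integral>w. Psi 0 w \<partial>M) = (\<integral>w. Psi 0 w0 \<partial>M)"
    by (simp add: Psi_def X_0 U_0)
  also have "\<dots> = Psi 0 w0" using prob_space.prob_space[OF prob] by simp
  finally show ?case by simp
next
  case (Suc t)
  have "(\<integral>w. Psi (Suc t) w \<partial>M) \<le> cc * (\<integral>w. Psi t w \<partial>M)" by (rule step)
  also have "\<dots> \<le> cc * (cc ^ t * Psi 0 w0)" by (rule mult_left_mono[OF Suc cc_nonneg])
  finally show ?case by simp
qed

lemma nn_bound: "(\<integral>\<^sup>+ w. ennreal (Psi t w) \<partial>M) \<le> ennreal (cc ^ t * Psi 0 w0)"
proof -
  have "(\<integral>\<^sup>+ w. ennreal (Psi t w) \<partial>M) = ennreal (\<integral>w. Psi t w \<partial>M)"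
    by (rule nn_integral_eq_integral[OF Psi_int]) (simp add: Psi_nonneg)
  also have "\<dots> \<le> ennreal (cc ^ t * Psi 0 w0)" by (rule ennreal_leI[OF exp_bound])
  finally show ?thesis .
qed

lemma AE_Psi0: "AE w in M. (\<lambda>t. Psi t w) \<longlonglongrightarrow> 0"
proof -
  have geo: "summable (\<lambda>t. cc ^ t * Psi 0 w0)"
    using cc_nonneg cc_lt1 by (intro summable_mult2 summable_geometric) simp
  have "(\<integral>\<^sup>+ w. (\<Sum>t. ennreal (Psi t w)) \<partial>M) = (\<Sum>t. \<integral>\<^sup>+ w. ennreal (Psi t w) \<partial>M)"
    by (rule nn_integral_suminf) (use Psi_meas in measurable)
  also have "\<dots> \<le> (\<Sum>t. ennreal (cc ^ t * Psi 0 w0))"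
    by (intro suminf_le nn_bound) auto
  also have "\<dots> = ennreal (\<Sum>t. cc ^ t * Psi 0 w0)"
    by (rule suminf_ennreal2[OF _ geo]) (simp add: cc_nonneg Psi_nonneg)
  finally have "(\<integral>\<^sup>+ w. (\<Sum>t. ennreal (Psi t w)) \<partial>M) \<noteq> \<infinity>"
    by (auto simp: top_unique)
  hence "AE w in M. (\<Sum>t. ennreal (Psi t w)) \<noteq> \<infinity>"
    by (intro nn_integral_PInf_AE) (use Psi_meas in measurable)
  thus ?thesis
  proof (rule eventually_mono)
    fix w assume "(\<Sum>t. ennreal (Psi t w)) \<noteq> \<infinity>"
    hence "summable (\<lambda>t. Psi t w)" by (intro summable_suminf_not_top) (auto simp: Psi_nonneg)
    thus "(\<lambda>t. Psi t w) \<longlonglongrightarrow> 0" by (rule summable_LIMSEQ_zero)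
  qed
qed

lemma term_le_Psi:
  assumes "i < n"
  shows "(1 / \<gamma>) * (norm (X t w i - xstar))\<^sup>2 + \<gamma> * (1 + \<omega>)\<^sup>2 * (norm (U t w i - - g i xstar))\<^sup>2 \<le> Psi t w"
  unfolding Psi_def
  by (rule member_le_sum[where f="\<lambda>i. (1 / \<gamma>) * (norm (X t w i - xstar))\<^sup>2 + \<gamma> * (1 + \<omega>)\<^sup>2 * (norm (U t w i - - g i xstar))\<^sup>2"])
     (use assms gamma_pos in auto)

lemma conv:
  assumes P: "(\<lambda>t. Psi t w) \<longlonglongrightarrow> 0" and i: "i < n"
  shows "(\<lambda>t. X t w i) \<longlonglongrightarrow> xstar" "(\<lambda>t. U t w i) \<longlonglongrightarrow> - g i xstar"
    "(\<lambda>t. XH t w i) \<longlonglongrightarrow> xstar"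
proof -
  have w1: "0 < 1 + \<omega>" using omega_nonneg by simp
  have k0: "0 < \<gamma> * (1 + \<omega>)\<^sup>2" using gamma_pos w1 by simp
  have bx: "norm (X t w i - xstar) \<le> sqrt (\<gamma> * Psi t w)" for t
  proof -
    have "(1 / \<gamma>) * (norm (X t w i - xstar))\<^sup>2 \<le> Psi t w"
      using term_le_Psi[OF i, of t w] gamma_pos w1 by (smt (verit) mult_nonneg_nonneg zero_le_power2)
    hence "(norm (X t w i - xstar))\<^sup>2 \<le> \<gamma> * Psi t w" using gamma_pos by (simp add: field_simps)
    thus ?thesis by (simp add: real_le_rsqrt)
  qed
  have bu: "norm (U t w i - - g i xstar) \<le> sqrt (Psi t w / (\<gamma> * (1 + \<omega>)\<^sup>2))" for t
  proof -
    have "\<gamma> * (1 + \<omega>)\<^sup>2 * (norm (U t w i - - g i xstar))\<^sup>2 \<le> Psi t w"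
      using term_le_Psi[OF i, of t w] gamma_pos by (smt (verit) divide_nonneg_nonneg zero_le_power2 mult_nonneg_nonneg)
    hence "(norm (U t w i - - g i xstar))\<^sup>2 \<le> Psi t w / (\<gamma> * (1 + \<omega>)\<^sup>2)" using k0 by (simp add: field_simps)
    thus ?thesis by (simp add: real_le_rsqrt)
  qed
  have t1: "(\<lambda>t. sqrt (\<gamma> * Psi t w)) \<longlonglongrightarrow> 0"
    using tendsto_real_sqrt[OF tendsto_mult[OF tendsto_const P, of \<gamma>]] by simp
  have t2: "(\<lambda>t. sqrt (Psi t w / (\<gamma> * (1 + \<omega>)\<^sup>2))) \<longlonglongrightarrow> 0"
    using tendsto_real_sqrt[OF tendsto_divide[OF P tendsto_const, of "\<gamma> * (1 + \<omega>)\<^sup>2"]] w1 gamma_pos by simp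
  show X: "(\<lambda>t. X t w i) \<longlonglongrightarrow> xstar"
    by (rule LIM_zero_cancel, rule Lim_null_comparison[OF _ t1]) (use bx in auto)
  show U: "(\<lambda>t. U t w i) \<longlonglongrightarrow> - g i xstar"
    by (rule LIM_zero_cancel, rule Lim_null_comparison[OF _ t2]) (use bu in auto)
  have ct: "isCont (g i) xstar" using g_cont[OF i] continuous_on_eq_continuous_at[of UNIV] by auto
  have "(\<lambda>t. X t w i - \<gamma> *\<^sub>R g i (X t w i) - \<gamma> *\<^sub>R U t w i) \<longlonglongrightarrow> xstar - \<gamma> *\<^sub>R g i xstar - \<gamma> *\<^sub>R (- g i xstar)"
    by (intro tendsto_intros X U isCont_tendsto_compose[OF ct X])
  thus "(\<lambda>t. XH t w i) \<longlonglongrightarrow> xstar" by (simp add: XH_eq)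
qed


lemma main:
  shows
    "let ustar = (\<lambda>i. - g i xstar);
         X = (\<lambda>t w. fst (rpfl n g \<gamma> \<omega> R x0 u0 t w));
         U = (\<lambda>t w. snd (rpfl n g \<gamma> \<omega> R x0 u0 t w));
         Xh = (\<lambda>t w. rpfl_xhat g \<gamma> (rpfl n g \<gamma> \<omega> R x0 u0 t w));
         \<Psi> = (\<lambda>t w. \<Sum>i<n. (1 / \<gamma>) * (norm (X t w i - xstar))\<^sup>2
                            + \<gamma> * (1 + \<omega>)\<^sup>2 * (norm (U t w i - ustar i))\<^sup>2);
         \<Psi>0 = (\<Sum>i<n. (1 / \<gamma>) * (norm (x0 i - xstar))\<^sup>2 + \<gamma> * (1 + \<omega>)\<^sup>2 * (norm (u0 i - ustar i))\<^sup>2);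
         c = max ((1 - \<gamma> * \<mu>)\<^sup>2) (max ((\<gamma> * L - 1)\<^sup>2) (1 - 1 / (1 + \<omega>)\<^sup>2))
     in c < 1
        \<and> (\<forall>t. (\<integral>\<^sup>+ w. ennreal (\<Psi> t w) \<partial>M) \<le> ennreal (c ^ t * \<Psi>0))
        \<and> (AE w in M. \<forall>i<n. (\<lambda>t. X t w i) \<longlonglongrightarrow> xstar
                           \<and> (\<lambda>t. Xh t w i) \<longlonglongrightarrow> xstar
                           \<and> (\<lambda>t. U t w i) \<longlonglongrightarrow> ustar i)"
proof -
  have P0: "(\<Sum>i<n. (1 / \<gamma>) * (norm (x0 i - xstar))\<^sup>2 + \<gamma> * (1 + \<omega>)\<^sup>2 * (norm (u0 i - - g i xstar))\<^sup>2) = Psi 0 w0" for w0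
    by (simp add: Psi_def X_0 U_0)
  have PP: "(\<Sum>i<n. (1 / \<gamma>) * (norm (fst (rpfl n g \<gamma> \<omega> R x0 u0 t w) i - xstar))\<^sup>2
              + \<gamma> * (1 + \<omega>)\<^sup>2 * (norm (snd (rpfl n g \<gamma> \<omega> R x0 u0 t w) i - - g i xstar))\<^sup>2) = Psi t w" for t w
    by (simp add: Psi_def X_def U_def)
  have AEc: "AE w in M. \<forall>i<n. (\<lambda>t. X t w i) \<longlonglongrightarrow> xstar \<and> (\<lambda>t. XH t w i) \<longlonglongrightarrow> xstar
                 \<and> (\<lambda>t. U t w i) \<longlonglongrightarrow> - g i xstar"
    using AE_Psi0 by (rule eventually_mono) (use conv in blast)
  show ?thesis
    unfolding Let_def PP P0[of undefined]
    using cc_lt1 nn_bound[of _ undefined] AEc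
    unfolding cc_def X_def U_def XH_def by blast
qed

end

theorem theorem10:
  fixes M :: "'w measure"
    and n :: nat
    and f :: "nat \<Rightarrow> 'd::euclidean_space \<Rightarrow> real"
    and g :: "nat \<Rightarrow> 'd \<Rightarrow> 'd"
    and \<mu> L \<gamma> \<omega> :: real
    and R :: "nat \<Rightarrow> 'w \<Rightarrow> 'd \<Rightarrow> 'd"
    and x0 u0 :: "nat \<Rightarrow> 'd"
    and xstar :: 'd
  assumes prob: "prob_space M"
    and n_pos: "n \<ge> 1"
    and mu_pos: "0 < \<mu>" and mu_le_L: "\<mu> \<le> L"
    and grad: "\<And>i x. i < n \<Longrightarrow> GDERIV (f i) x :> g i x"
    and sconvex: "\<And>i. i < n \<Longrightarrow> strongly_convex_on UNIV \<mu> (f i)"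
    and smooth: "\<And>i x y. i < n \<Longrightarrow> norm (g i x - g i y) \<le> L * norm (x - y)"
    and gamma_pos: "0 < \<gamma>" and gamma_lt: "\<gamma> < 2 / L"
    and omega_nonneg: "0 \<le> \<omega>"
    and u0_sum: "(\<Sum>i<n. u0 i) = 0"
    and R_linear: "\<And>t w. w \<in> space M \<Longrightarrow> linear (R t w)"
    and R_meas: "\<And>t v. (\<lambda>w. R t w v) \<in> borel_measurable M"
    and R_unbiased: "\<And>t y. y \<in> borel_measurable (rpfl_filt M n g \<gamma> \<omega> R x0 u0 t)
        \<Longrightarrow> integrable M (\<lambda>w. (norm (y w))\<^sup>2)
        \<Longrightarrow> AE w in M. \<forall>b\<in>Basis.
              real_cond_exp M (rpfl_filt M n g \<gamma> \<omega> R x0 u0 t) (\<lambda>w'. R t w' (y w') \<bullet> b) w = y w \<bullet> b"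
    and R_variance: "\<And>t y. y \<in> borel_measurable (rpfl_filt M n g \<gamma> \<omega> R x0 u0 t)
        \<Longrightarrow> AE w in M.
              nn_cond_exp M (rpfl_filt M n g \<gamma> \<omega> R x0 u0 t) (\<lambda>w'. ennreal ((norm (R t w' (y w') - y w'))\<^sup>2)) w
                \<le> ennreal (\<omega> * (norm (y w))\<^sup>2)"
    and xstar_min: "\<And>y. (\<Sum>i<n. f i xstar) \<le> (\<Sum>i<n. f i y)"
  shows
    "let ustar = (\<lambda>i. - g i xstar);
         X = (\<lambda>t w. fst (rpfl n g \<gamma> \<omega> R x0 u0 t w));
         U = (\<lambda>t w. snd (rpfl n g \<gamma> \<omega> R x0 u0 t w));
         Xh = (\<lambda>t w. rpfl_xhat g \<gamma> (rpfl n g \<gamma> \<omega> R x0 u0 t w));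
         \<Psi> = (\<lambda>t w. \<Sum>i<n. (1 / \<gamma>) * (norm (X t w i - xstar))\<^sup>2
                            + \<gamma> * (1 + \<omega>)\<^sup>2 * (norm (U t w i - ustar i))\<^sup>2);
         \<Psi>0 = (\<Sum>i<n. (1 / \<gamma>) * (norm (x0 i - xstar))\<^sup>2 + \<gamma> * (1 + \<omega>)\<^sup>2 * (norm (u0 i - ustar i))\<^sup>2);
         c = max ((1 - \<gamma> * \<mu>)\<^sup>2) (max ((\<gamma> * L - 1)\<^sup>2) (1 - 1 / (1 + \<omega>)\<^sup>2))
     in c < 1
        \<and> (\<forall>t. (\<integral>\<^sup>+ w. ennreal (\<Psi> t w) \<partial>M) \<le> ennreal (c ^ t * \<Psi>0))
        \<and> (AE w in M. \<forall>i<n. (\<lambda>t. X t w i) \<longlonglongrightarrow> xstar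
                           \<and> (\<lambda>t. Xh t w i) \<longlonglongrightarrow> xstar
                           \<and> (\<lambda>t. U t w i) \<longlonglongrightarrow> ustar i)"
proof -
  interpret rp M n f g \<mu> L \<gamma> \<omega> R x0 u0 xstar
    using assms unfolding rp_def by blast
  show ?thesis by (rule main)
qed

end
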